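(* A domain $R$ is a Prüfer $v$-multiplication domain (P$v$MD) if and only if every nonzero finitely generated ideal of $R$ is $w$-basic.
   Context: For a domain $R$ with quotient field $K$ and nonzero fractional ideal $I$: $I^{-1}=(R:I)=\{x\in K:xI\subseteq R\}$, $I_v=(I^{-1})^{-1}$, $I_t=\bigcup J_v$ over finitely generated subideals $J\subseteq I$; $I$ is a $t$-ideal if $I_t=I$; a maximal $t$-ideal is an ideal maximal among proper integral $t$-ideals. The $w$-operation is $I_w=\bigcup (I:J)$ over finitely generated ideals $J$ of $R$ with $J_v=R$ (equivalently $I_w=\bigcap_M IR_M$ over maximal $t$-ideals $M$). $R$ is a P$v$MD if every nonzero finitely generated ideal $I$ is $t$-invertible, i.e. $(II^{-1})_t=R$ (equivalently, $R_M$ is a valuation domain for each maximal $t$-ideal $M$). For a nonzero ideal $I$, an ideal $J\subseteq I$ is a $w$-reduction of $I$ if $(JI^n)_w=(I^{n+1})_w$ for some integer $n\ge0$; $I$ is $w$-basic if every $w$-reduction $J$ of $I$ satisfies $J_w=I_w$. *)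

theory Defs
  imports "HOL-Computational_Algebra.Fraction_Field"
begin

text \<open>The domain R is the type 'a (class idom); its quotient field K is the type 'a fract.
  R is identified with its image in K under a |-> a/1.  Fractional ideals and
  integral ideals are represented as subsets of K.\<close>

definition Rset :: "'a::idom fract set" where
  "Rset = (\<lambda>a. Fract a 1) ` UNIV"

definition Rsubmod :: "'a::idom fract set \<Rightarrow> bool" where
  "Rsubmod M \<longleftrightarrow> 0 \<in> M \<and> (\<forall>x\<in>M. \<forall>y\<in>M. x + y \<in> M) \<and> (\<forall>r\<in>Rset. \<forall>x\<in>M. r * x \<in> M)"

definition Rspan :: "'a::idom fract set \<Rightarrow> 'a fract set" where
  "Rspan S = \<Inter>{M. Rsubmod M \<and> S \<subseteq> M}"

definition setmult :: "'a::idom fract set \<Rightarrow> 'a fract set \<Rightarrow> 'a fract set" where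
  "setmult A B = Rspan {a * b | a b. a \<in> A \<and> b \<in> B}"

fun ipow :: "'a::idom fract set \<Rightarrow> nat \<Rightarrow> 'a fract set" where
  "ipow I 0 = Rset"
| "ipow I (Suc n) = setmult I (ipow I n)"

definition colon :: "'a::idom fract set \<Rightarrow> 'a fract set \<Rightarrow> 'a fract set" where
  "colon A B = {x. \<forall>b\<in>B. x * b \<in> A}"

definition finv :: "'a::idom fract set \<Rightarrow> 'a fract set" where
  "finv I = colon Rset I"

definition vop :: "'a::idom fract set \<Rightarrow> 'a fract set" where
  "vop I = finv (finv I)"

definition int_ideal :: "'a::idom fract set \<Rightarrow> bool" where
  "int_ideal I \<longleftrightarrow> Rsubmod I \<and> I \<subseteq> Rset"

definition fg_ideal :: "'a::idom fract set \<Rightarrow> bool" where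
  "fg_ideal I \<longleftrightarrow> (\<exists>F. finite F \<and> F \<subseteq> Rset \<and> I = Rspan F)"

definition tclos :: "'a::idom fract set \<Rightarrow> 'a fract set" where
  "tclos I = \<Union>{vop J | J. fg_ideal J \<and> J \<subseteq> I}"

definition wop :: "'a::idom fract set \<Rightarrow> 'a fract set" where
  "wop I = \<Union>{colon I J | J. fg_ideal J \<and> vop J = Rset}"

definition PvMD :: "'a::idom itself \<Rightarrow> bool" where
  "PvMD _ \<longleftrightarrow> (\<forall>I :: 'a fract set. fg_ideal I \<and> I \<noteq> {0} \<longrightarrow> tclos (setmult I (finv I)) = Rset)"

definition w_reduction :: "'a::idom fract set \<Rightarrow> 'a fract set \<Rightarrow> bool" where
  "w_reduction J I \<longleftrightarrow> int_ideal J \<and> J \<subseteq> I \<and>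
     (\<exists>n. wop (setmult J (ipow I n)) = wop (ipow I (Suc n)))"

definition w_basic :: "'a::idom fract set \<Rightarrow> bool" where
  "w_basic I \<longleftrightarrow> (\<forall>J. w_reduction J I \<longrightarrow> wop J = wop I)"

end

theory Submission
  imports Defs
begin

lemma Rset_iff: "x \<in> Rset \<longleftrightarrow> (\<exists>a. x = Fract a 1)"
  unfolding Rset_def by auto

lemma Rset_add: "x \<in> Rset \<Longrightarrow> y \<in> Rset \<Longrightarrow> x + y \<in> Rset"
  unfolding Rset_iff by (auto intro: exI[of _ "_ + _"])

lemma Rset_mult: "x \<in> Rset \<Longrightarrow> y \<in> Rset \<Longrightarrow> x * y \<in> Rset"
  unfolding Rset_iff by (auto intro: exI[of _ "_ * _"])

lemma Rset_0: "0 \<in> Rset" and Rset_1: "1 \<in> Rset"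
  unfolding Rset_iff by (auto simp: Zero_fract_def One_fract_def)

lemma Rset_uminus: "x \<in> Rset \<Longrightarrow> - x \<in> Rset"
  unfolding Rset_iff by (auto intro: exI[of _ "- _"])

lemma Rset_diff: "x \<in> Rset \<Longrightarrow> y \<in> Rset \<Longrightarrow> x - y \<in> Rset"
  using Rset_add[of x "-y"] Rset_uminus by auto

lemma Rsubmod_Rset: "Rsubmod Rset"
  unfolding Rsubmod_def using Rset_0 Rset_add Rset_mult by blast

lemma Rsubmod_diff: "Rsubmod M \<Longrightarrow> x \<in> M \<Longrightarrow> y \<in> M \<Longrightarrow> x - y \<in> M"
proof -
  assume M: "Rsubmod M" "x \<in> M" "y \<in> M"
  have "(-1) * y \<in> M" using M Rset_uminus[OF Rset_1] unfolding Rsubmod_def by blast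
  then show ?thesis using M unfolding Rsubmod_def by (metis diff_conv_add_uminus mult_minus1)
qed

lemma Rsubmod_smult: "Rsubmod M \<Longrightarrow> r \<in> Rset \<Longrightarrow> x \<in> M \<Longrightarrow> r * x \<in> M"
  unfolding Rsubmod_def by blast

lemma Rsubmod_add: "Rsubmod M \<Longrightarrow> x \<in> M \<Longrightarrow> y \<in> M \<Longrightarrow> x + y \<in> M"
  unfolding Rsubmod_def by blast

lemma Rsubmod_0: "Rsubmod M \<Longrightarrow> 0 \<in> M"
  unfolding Rsubmod_def by blast

lemma Rsubmod_Rspan: "Rsubmod (Rspan S)"
  unfolding Rspan_def Rsubmod_def by auto

lemma Rspan_sup: "S \<subseteq> Rspan S"
  unfolding Rspan_def by auto

lemma Rspan_least: "Rsubmod M \<Longrightarrow> S \<subseteq> M \<Longrightarrow> Rspan S \<subseteq> M"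
  unfolding Rspan_def by auto

lemma Rspan_mono: "S \<subseteq> T \<Longrightarrow> Rspan S \<subseteq> Rspan T"
  by (meson Rspan_least Rspan_sup Rsubmod_Rspan order_trans)

lemma Rspan_id: "Rsubmod M \<Longrightarrow> Rspan M = M"
  by (simp add: Rspan_least Rspan_sup subset_antisym)

lemma Rsubmod_premult: "Rsubmod M \<Longrightarrow> Rsubmod {z. x * z \<in> M}"
  unfolding Rsubmod_def by (auto simp: distrib_left mult.left_commute)

lemma span_ext: "Rsubmod M \<Longrightarrow> \<forall>s\<in>S. x * s \<in> M \<Longrightarrow> b \<in> Rspan S \<Longrightarrow> x * b \<in> M"
proof -
  assume a: "Rsubmod M" "\<forall>s\<in>S. x * s \<in> M" "b \<in> Rspan S"
  have "Rspan S \<subseteq> {z. x * z \<in> M}"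
    by (rule Rspan_least[OF Rsubmod_premult[OF a(1)]]) (use a(2) in auto)
  then show ?thesis using a(3) by auto
qed

lemma setmult_in: "a \<in> A \<Longrightarrow> b \<in> B \<Longrightarrow> a * b \<in> setmult A B"
proof -
  assume "a \<in> A" "b \<in> B"
  then have "a * b \<in> {a * b | a b. a \<in> A \<and> b \<in> B}" by blast
  then show ?thesis unfolding setmult_def using Rspan_sup by (rule rev_subsetD)
qed

lemma Rsubmod_setmult: "Rsubmod (setmult A B)"
  unfolding setmult_def by (rule Rsubmod_Rspan)

lemma setmult_le: "Rsubmod M \<Longrightarrow> (\<And>a b. a \<in> A \<Longrightarrow> b \<in> B \<Longrightarrow> a * b \<in> M) \<Longrightarrow> setmult A B \<subseteq> M"
  unfolding setmult_def by (rule Rspan_least) blast+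

lemma setmult_span_le:
  assumes M: "Rsubmod M" and "\<And>a b. a \<in> A \<Longrightarrow> b \<in> B \<Longrightarrow> a * b \<in> M"
  shows "setmult (Rspan A) (Rspan B) \<subseteq> M"
proof (rule setmult_le[OF M])
  fix x y assume x: "x \<in> Rspan A" and y: "y \<in> Rspan B"
  have "\<forall>a\<in>A. a * y \<in> M"
  proof
    fix a assume "a \<in> A"
    then show "a * y \<in> M" using span_ext[OF M _ y, of a] assms(2) by blast
  qed
  then have "\<forall>a\<in>A. y * a \<in> M" by (simp add: mult.commute)
  then have "y * x \<in> M" using span_ext[OF M _ x] by blast
  then show "x * y \<in> M" by (simp add: mult.commute)
qed

lemma setmult_mono: "A \<subseteq> A' \<Longrightarrow> B \<subseteq> B' \<Longrightarrow> setmult A B \<subseteq> setmult A' B'"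
proof (rule setmult_le[OF Rsubmod_setmult])
  fix a b assume "A \<subseteq> A'" "B \<subseteq> B'" "a \<in> A" "b \<in> B"
  then show "a * b \<in> setmult A' B'" using setmult_in by blast
qed

lemma setmult_sub_left: "Rsubmod X \<Longrightarrow> Y \<subseteq> Rset \<Longrightarrow> setmult X Y \<subseteq> X"
proof (rule setmult_le)
  fix a b assume "Rsubmod X" "Y \<subseteq> Rset" "a \<in> X" "b \<in> Y"
  then have "b * a \<in> X" using Rsubmod_smult by blast
  then show "a * b \<in> X" by (simp add: mult.commute)
qed

lemma setmult_sub_right: "Rsubmod Y \<Longrightarrow> X \<subseteq> Rset \<Longrightarrow> setmult X Y \<subseteq> Y"
proof (rule setmult_le)
  fix a b assume "Rsubmod Y" "X \<subseteq> Rset" "a \<in> X" "b \<in> Y"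
  then show "a * b \<in> Y" using Rsubmod_smult by blast
qed

lemma setmult_Rset: "Rsubmod X \<Longrightarrow> setmult X Rset = X"
  apply (rule antisym)
   apply (simp add: setmult_sub_left)
  by (metis mult_1_right setmult_in Rset_1 subsetI)

lemma Rspan_1: "Rspan {1} = (Rset :: 'a::idom fract set)"
proof (rule antisym)
  show "Rspan {1} \<subseteq> (Rset :: 'a fract set)" using Rspan_least[OF Rsubmod_Rset] Rset_1 by auto
  show "Rset \<subseteq> (Rspan {1} :: 'a fract set)"
  proof
    fix r :: "'a fract" assume r: "r \<in> Rset"
    have "(1::'a fract) \<in> Rspan {1}" using Rspan_sup by blast
    then have "r * 1 \<in> Rspan {1}" using Rsubmod_smult[OF Rsubmod_Rspan r] by blast
    then show "r \<in> Rspan {1}" by simp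
  qed
qed

lemma Rsubmod_colon: "Rsubmod M \<Longrightarrow> Rsubmod (colon M X)"
  unfolding Rsubmod_def colon_def by (auto simp: distrib_right mult.assoc)

lemma Rsubmod_finv: "Rsubmod (finv X)"
  unfolding finv_def by (rule Rsubmod_colon[OF Rsubmod_Rset])

lemma finv_antimono: "X \<subseteq> Y \<Longrightarrow> finv Y \<subseteq> finv X"
  unfolding finv_def colon_def by blast

lemma sub_finv_finv: "X \<subseteq> finv (finv X)"
  unfolding finv_def colon_def by (auto simp: mult.commute)

lemma finv_Rset: "finv Rset = (Rset :: 'a::idom fract set)"
proof (rule antisym)
  show "finv Rset \<subseteq> (Rset :: 'a fract set)"
  proof
    fix x :: "'a fract" assume "x \<in> finv Rset"
    then have "x * 1 \<in> Rset" unfolding finv_def colon_def using Rset_1 by blast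
    then show "x \<in> Rset" by simp
  qed
  show "Rset \<subseteq> finv (Rset :: 'a fract set)"
    unfolding finv_def colon_def using Rset_mult by blast
qed

lemma vop_Rset: "vop Rset = (Rset :: 'a::idom fract set)"
  unfolding vop_def by (simp add: finv_Rset)

lemma fg_sub: "fg_ideal G \<Longrightarrow> G \<subseteq> Rset"
  unfolding fg_ideal_def using Rspan_least[OF Rsubmod_Rset] by blast

lemma fg_submod: "fg_ideal G \<Longrightarrow> Rsubmod G"
  unfolding fg_ideal_def using Rsubmod_Rspan by blast

lemma fg_Rset: "fg_ideal (Rset :: 'a::idom fract set)"
  unfolding fg_ideal_def using Rspan_1[where 'a='a] Rset_1 by (intro exI[of _ "{1}"]) auto

lemma finv_sup_Rset: "G \<subseteq> Rset \<Longrightarrow> Rset \<subseteq> finv G"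
  using finv_antimono[of G Rset] finv_Rset by blast

lemma GV_finv: "G \<subseteq> Rset \<Longrightarrow> vop G = Rset \<Longrightarrow> finv G = Rset"
proof -
  assume G: "G \<subseteq> Rset" "vop G = Rset"
  have "finv G \<subseteq> finv (finv (finv G))" by (rule sub_finv_finv)
  also have "\<dots> = finv Rset" using G(2) unfolding vop_def by simp
  finally have "finv G \<subseteq> Rset" by (simp add: finv_Rset)
  then show ?thesis using finv_sup_Rset[OF G(1)] by blast
qed

lemma vop_sub: "G \<subseteq> Rset \<Longrightarrow> vop G \<subseteq> Rset"
  unfolding vop_def using finv_antimono[OF finv_sup_Rset] finv_Rset by blast

lemma one_vop: "G \<subseteq> Rset \<Longrightarrow> 1 \<in> vop G \<Longrightarrow> vop G = Rset"
proof -
  assume G: "G \<subseteq> Rset" "1 \<in> vop G"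
  have "Rset \<subseteq> vop G"
  proof
    fix r :: "'a fract" assume "r \<in> Rset"
    then have "r * 1 \<in> vop G" using Rsubmod_smult[OF Rsubmod_finv _ G(2)[unfolded vop_def]]
      unfolding vop_def by blast
    then show "r \<in> vop G" by simp
  qed
  then show ?thesis using vop_sub[OF G(1)] by blast
qed

lemma fg_mult:
  assumes "fg_ideal A" "fg_ideal B" shows "fg_ideal (setmult A B)"
proof -
  obtain FA where FA: "finite FA" "FA \<subseteq> Rset" "A = Rspan FA" using assms(1) fg_ideal_def by blast
  obtain FB where FB: "finite FB" "FB \<subseteq> Rset" "B = Rspan FB" using assms(2) fg_ideal_def by blast
  define P where "P = (\<lambda>(a,b). a * b) ` (FA \<times> FB)"
  have fin: "finite P" unfolding P_def using FA(1) FB(1) by (intro finite_imageI finite_cartesian_product)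
  have PR: "P \<subseteq> Rset"
  proof
    fix x assume "x \<in> P"
    then obtain a b where "a \<in> FA" "b \<in> FB" "x = a * b" unfolding P_def by auto
    then show "x \<in> Rset" using FA(2) FB(2) Rset_mult by blast
  qed
  have "setmult A B \<subseteq> Rspan P" unfolding FA(3) FB(3)
  proof (rule setmult_span_le[OF Rsubmod_Rspan])
    fix a b assume "a \<in> FA" "b \<in> FB"
    then have "a * b \<in> P" unfolding P_def by force
    then show "a * b \<in> Rspan P" using Rspan_sup by blast
  qed
  moreover have "Rspan P \<subseteq> setmult A B"
  proof (rule Rspan_least[OF Rsubmod_setmult])
    show "P \<subseteq> setmult A B"
    proof
      fix x assume "x \<in> P"
      then obtain a b where "a \<in> FA" "b \<in> FB" "x = a * b" unfolding P_def by auto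
      then show "x \<in> setmult A B" using setmult_in FA(3) FB(3) Rspan_sup by blast
    qed
  qed
  ultimately show ?thesis unfolding fg_ideal_def using fin PR by blast
qed

lemma setmult_sub_Rset: "A \<subseteq> Rset \<Longrightarrow> B \<subseteq> Rset \<Longrightarrow> setmult A B \<subseteq> Rset"
  by (rule setmult_le[OF Rsubmod_Rset]) (meson Rset_mult subsetD)

lemma GV_mult:
  assumes A: "fg_ideal A" "vop A = Rset" and B: "fg_ideal B" "vop B = Rset"
  shows "vop (setmult A B) = Rset"
proof -
  have AR: "A \<subseteq> Rset" and BR: "B \<subseteq> Rset" using fg_sub A B by auto
  have fA: "finv A = Rset" and fB: "finv B = Rset" using GV_finv AR BR A B by auto
  have "finv (setmult A B) \<subseteq> Rset"
  proof
    fix x assume x: "x \<in> finv (setmult A B)"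
    have "\<forall>b\<in>B. x * b \<in> finv A"
    proof
      fix b assume b: "b \<in> B"
      have "\<forall>a\<in>A. x * b * a \<in> Rset"
      proof
        fix a assume "a \<in> A"
        then have "a * b \<in> setmult A B" using setmult_in b by blast
        then have "x * (a * b) \<in> Rset" using x unfolding finv_def colon_def by blast
        then show "x * b * a \<in> Rset" by (simp add: ac_simps)
      qed
      then show "x * b \<in> finv A" unfolding finv_def colon_def by blast
    qed
    then have "x \<in> finv B" using fA unfolding finv_def colon_def by blast
    then show "x \<in> Rset" using fB by simp
  qed
  then have "finv (setmult A B) = Rset"
    using finv_sup_Rset[OF setmult_sub_Rset[OF AR BR]] by blast
  then show ?thesis unfolding vop_def by (simp add: finv_Rset)
qed

lemma wop_iff: "x \<in> wop M \<longleftrightarrow> (\<exists>G. fg_ideal G \<and> vop G = Rset \<and> (\<forall>g\<in>G. x * g \<in> M))"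
  unfolding wop_def colon_def by blast

lemma wop_mono: "M \<subseteq> N \<Longrightarrow> wop M \<subseteq> wop N"
proof
  fix x assume "M \<subseteq> N" "x \<in> wop M"
  then obtain G where "fg_ideal G" "vop G = Rset" "\<forall>g\<in>G. x * g \<in> M" unfolding wop_iff by blast
  then show "x \<in> wop N" unfolding wop_iff using \<open>M \<subseteq> N\<close> by blast
qed

lemma sub_wop: "Rsubmod M \<Longrightarrow> M \<subseteq> wop M"
proof
  fix x assume "Rsubmod M" "x \<in> M"
  then have "\<forall>g\<in>Rset. x * g \<in> M" by (metis Rsubmod_smult mult.commute)
  then show "x \<in> wop M" unfolding wop_iff using fg_Rset vop_Rset by blast
qed

lemma GV_prod:
  assumes A: "fg_ideal A" "vop A = Rset" and B: "fg_ideal B" "vop B = Rset"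
  shows "fg_ideal (setmult A B) \<and> vop (setmult A B) = Rset \<and> setmult A B \<subseteq> A \<and> setmult A B \<subseteq> B"
proof -
  have "setmult A B \<subseteq> A" by (rule setmult_sub_left[OF fg_submod[OF A(1)] fg_sub[OF B(1)]])
  moreover have "setmult A B \<subseteq> B" by (rule setmult_sub_right[OF fg_submod[OF B(1)] fg_sub[OF A(1)]])
  ultimately show ?thesis using fg_mult[OF A(1) B(1)] GV_mult[OF A B] by blast
qed

lemma Rsubmod_wop: "Rsubmod (M :: 'a::idom fract set) \<Longrightarrow> Rsubmod (wop M)"
proof -
  assume M: "Rsubmod M"
  have "0 \<in> wop M" using sub_wop[OF M] Rsubmod_0[OF M] by blast
  moreover have "\<forall>x\<in>wop M. \<forall>y\<in>wop M. x + y \<in> wop M"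
  proof (intro ballI)
    fix x y assume "x \<in> wop M" "y \<in> wop M"
    then obtain A B where A: "fg_ideal A" "vop A = Rset" "\<forall>g\<in>A. x * g \<in> M"
      and B: "fg_ideal B" "vop B = Rset" "\<forall>g\<in>B. y * g \<in> M" unfolding wop_iff by blast
    have P: "fg_ideal (setmult A B) \<and> vop (setmult A B) = Rset \<and> setmult A B \<subseteq> A \<and> setmult A B \<subseteq> B"
      by (rule GV_prod[OF A(1,2) B(1,2)])
    have "\<forall>g\<in>setmult A B. (x + y) * g \<in> M"
    proof
      fix g assume "g \<in> setmult A B"
      then have "x * g \<in> M" "y * g \<in> M" using P A(3) B(3) by blast+
      then have "x * g + y * g \<in> M" using Rsubmod_add[OF M] by blast
      then show "(x + y) * g \<in> M" by (simp add: distrib_right)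
    qed
    then show "x + y \<in> wop M" unfolding wop_iff using P by blast
  qed
  moreover have "\<forall>r\<in>Rset. \<forall>x\<in>wop M. r * x \<in> wop M"
  proof (intro ballI)
    fix r x :: "'a fract" assume r: "r \<in> Rset" and "x \<in> wop M"
    then obtain A where A: "fg_ideal A" "vop A = Rset" "\<forall>g\<in>A. x * g \<in> M" unfolding wop_iff by blast
    have "\<forall>g\<in>A. r * x * g \<in> M" using A(3) Rsubmod_smult[OF M r] by (simp add: mult.assoc)
    then show "r * x \<in> wop M" unfolding wop_iff using A by blast
  qed
  ultimately show ?thesis unfolding Rsubmod_def by blast
qed

lemma GV_family:
  assumes "finite S" "\<forall>k\<in>S. fg_ideal (G k) \<and> vop (G k) = Rset"
  shows "\<exists>Q. fg_ideal Q \<and> vop Q = Rset \<and> (\<forall>k\<in>S. Q \<subseteq> G k)"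
  using assms
proof (induction S rule: finite_induct)
  case empty
  then show ?case using fg_Rset vop_Rset by blast
next
  case (insert k S)
  then obtain Q where Q: "fg_ideal Q" "vop Q = Rset" "\<forall>k\<in>S. Q \<subseteq> G k" by blast
  have P: "fg_ideal (setmult (G k) Q) \<and> vop (setmult (G k) Q) = Rset \<and> setmult (G k) Q \<subseteq> G k \<and> setmult (G k) Q \<subseteq> Q"
    using GV_prod insert.prems Q by blast
  then show ?case using Q(3) by blast
qed

lemma wop_idem:
  assumes M: "Rsubmod M" and G: "fg_ideal G" "vop G = Rset" and x: "\<forall>g\<in>G. x * g \<in> wop M"
  shows "x \<in> wop M"
proof -
  obtain F where F: "finite F" "F \<subseteq> Rset" "G = Rspan F" using G(1) fg_ideal_def by blast
  have "\<forall>f\<in>F. \<exists>H. fg_ideal H \<and> vop H = Rset \<and> (\<forall>h\<in>H. x * f * h \<in> M)"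
    using x F(3) Rspan_sup unfolding wop_iff by blast
  then obtain H where H: "\<forall>f\<in>F. fg_ideal (H f) \<and> vop (H f) = Rset \<and> (\<forall>h\<in>H f. x * f * h \<in> M)"
    by metis
  obtain Q where Q: "fg_ideal Q" "vop Q = Rset" "\<forall>f\<in>F. Q \<subseteq> H f"
    using GV_family[OF F(1), of H] H by blast
  have P: "fg_ideal (setmult G Q) \<and> vop (setmult G Q) = Rset \<and> setmult G Q \<subseteq> G \<and> setmult G Q \<subseteq> Q"
    by (rule GV_prod[OF G Q(1,2)])
  have "setmult G Q \<subseteq> {z. x * z \<in> M}" unfolding F(3)
  proof (rule setmult_le[OF Rsubmod_premult[OF M]])
    fix g q assume g: "g \<in> Rspan F" and q: "q \<in> Q"
    have "\<forall>f\<in>F. (x * q) * f \<in> M"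
    proof
      fix f assume f: "f \<in> F"
      then have "q \<in> H f" using Q(3) q by blast
      then have "x * f * q \<in> M" using H f by blast
      then show "(x * q) * f \<in> M" by (simp add: ac_simps)
    qed
    then have "(x * q) * g \<in> M" using span_ext[OF M _ g] by blast
    then show "g * q \<in> {z. x * z \<in> M}" by (simp add: ac_simps)
  qed
  then show ?thesis unfolding wop_iff using P by blast
qed

lemma Rspan_single: "Rspan {x::'a::idom fract} \<subseteq> {r * x | r. r \<in> Rset}"
proof (rule Rspan_least)
  show "Rsubmod {r * x | r. r \<in> Rset}"
    unfolding Rsubmod_def
  proof (intro conjI ballI)
    show "0 \<in> {r * x | r. r \<in> Rset}" using Rset_0 by force
  next
    fix u v :: "'a fract" assume "u \<in> {r * x | r. r \<in> Rset}" "v \<in> {r * x | r. r \<in> Rset}"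
    then obtain r s where "r \<in> Rset" "s \<in> Rset" "u = r * x" "v = s * x" by blast
    then show "u + v \<in> {r * x | r. r \<in> Rset}"
      using Rset_add by (auto simp: distrib_right intro!: exI[of _ "r + s"])
  next
    fix t u :: "'a fract" assume "t \<in> Rset" "u \<in> {r * x | r. r \<in> Rset}"
    then obtain r where "r \<in> Rset" "u = r * x" by blast
    then show "t * u \<in> {r * x | r. r \<in> Rset}"
      using Rset_mult \<open>t \<in> Rset\<close> by (auto simp: mult.assoc intro!: exI[of _ "t * r"])
  qed
  show "{x} \<subseteq> {r * x | r. r \<in> Rset}" using Rset_1 by force
qed

lemma Rspan_pair: "Rspan {x::'a::idom fract, y} \<subseteq> {r * x + s * y | r s. r \<in> Rset \<and> s \<in> Rset}"
proof (rule Rspan_least)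
  show "Rsubmod {r * x + s * y | r s. r \<in> Rset \<and> s \<in> Rset}"
    unfolding Rsubmod_def
  proof (intro conjI ballI)
    show "0 \<in> {r * x + s * y | r s. r \<in> Rset \<and> s \<in> Rset}" using Rset_0 by force
  next
    fix u v :: "'a fract" assume "u \<in> {r * x + s * y | r s. r \<in> Rset \<and> s \<in> Rset}" "v \<in> {r * x + s * y | r s. r \<in> Rset \<and> s \<in> Rset}"
    then obtain r s r' s' where "r \<in> Rset" "s \<in> Rset" "r' \<in> Rset" "s' \<in> Rset"
      "u = r * x + s * y" "v = r' * x + s' * y" by blast
    then show "u + v \<in> {r * x + s * y | r s. r \<in> Rset \<and> s \<in> Rset}"
    proof -
      have "u + v = (r + r') * x + (s + s') * y" using \<open>u = _\<close> \<open>v = _\<close> by (simp add: algebra_simps)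
      then show ?thesis using Rset_add \<open>r \<in> Rset\<close> \<open>s \<in> Rset\<close> \<open>r' \<in> Rset\<close> \<open>s' \<in> Rset\<close> by blast
    qed
  next
    fix t u :: "'a fract" assume "t \<in> Rset" "u \<in> {r * x + s * y | r s. r \<in> Rset \<and> s \<in> Rset}"
    then obtain r s where "r \<in> Rset" "s \<in> Rset" "u = r * x + s * y" by blast
    then show "t * u \<in> {r * x + s * y | r s. r \<in> Rset \<and> s \<in> Rset}"
    proof -
      have "t * u = (t * r) * x + (t * s) * y" using \<open>u = _\<close> by (simp add: algebra_simps)
      then show ?thesis using Rset_mult \<open>t \<in> Rset\<close> \<open>r \<in> Rset\<close> \<open>s \<in> Rset\<close> by blast
    qed
  qed
  show "{x, y} \<subseteq> {r * x + s * y | r s. r \<in> Rset \<and> s \<in> Rset}"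
  proof -
    have "x = 1 * x + 0 * y" "y = 0 * x + 1 * y" by simp_all
    then show ?thesis using Rset_0 Rset_1 by blast
  qed
qed

lemma fg_span: "finite F \<Longrightarrow> F \<subseteq> Rset \<Longrightarrow> fg_ideal (Rspan F)"
  unfolding fg_ideal_def by blast

lemma integral_lemma:
  fixes b e h c :: "'a::idom fract"
  assumes W: "\<forall>I :: 'a fract set. fg_ideal I \<and> I \<noteq> {0} \<longrightarrow> w_basic I"
    and b: "b \<in> Rset" "b \<noteq> 0" and be: "b * e \<in> Rset" and h: "h \<in> Rset" and c: "c \<in> Rset"
    and eq: "e * e = h * e - c"
  shows "e \<in> Rset"
proof -
  define I' where "I' = Rspan {b, b * e}"
  define J' where "J' = Rspan {b}"
  have fgI: "fg_ideal I'" unfolding I'_def using b be by (intro fg_span) auto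
  have fgJ: "fg_ideal J'" unfolding J'_def using b by (intro fg_span) auto
  have bI: "b \<in> I'" "b * e \<in> I'" unfolding I'_def using Rspan_sup by blast+
  have bJ: "b \<in> J'" unfolding J'_def using Rspan_sup by blast
  have JI: "J' \<subseteq> I'" unfolding I'_def J'_def by (rule Rspan_mono) auto
  have I0: "I' \<noteq> {0}" using bI b by auto
  have sI: "Rsubmod I'" unfolding I'_def by (rule Rsubmod_Rspan)
  have sJ: "Rsubmod J'" unfolding J'_def by (rule Rsubmod_Rspan)
  have eqm: "setmult J' I' = setmult I' I'"
  proof (rule antisym)
    show "setmult J' I' \<subseteq> setmult I' I'" using JI by (rule setmult_mono) simp
    have m1: "b * b \<in> setmult J' I'" using setmult_in bJ bI by blast
    have m2: "b * (b * e) \<in> setmult J' I'" using setmult_in bJ bI by blast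
    have m3: "b * e * b \<in> setmult J' I'" using m2 by (simp add: ac_simps)
    have "b * e * (b * e) = (b * b) * (e * e)" by (simp add: ac_simps)
    also have "\<dots> = (b * b) * (h * e - c)" using eq by simp
    also have "\<dots> = h * (b * (b * e)) - c * (b * b)" by (simp add: algebra_simps)
    finally have "b * e * (b * e) = h * (b * (b * e)) - c * (b * b)" .
    moreover have "h * (b * (b * e)) - c * (b * b) \<in> setmult J' I'"
      using Rsubmod_diff[OF Rsubmod_setmult Rsubmod_smult[OF Rsubmod_setmult h m2]
          Rsubmod_smult[OF Rsubmod_setmult c m1]] .
    ultimately have m4: "b * e * (b * e) \<in> setmult J' I'" by simp
    show "setmult I' I' \<subseteq> setmult J' I'" unfolding I'_def
    proof (rule setmult_span_le[OF Rsubmod_setmult])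
      fix x y assume "x \<in> {b, b * e}" "y \<in> {b, b * e}"
      then show "x * y \<in> setmult J' (Rspan {b, b * e})"
        using m1 m2 m3 m4 unfolding I'_def by auto
    qed
  qed
  have "w_reduction J' I'"
    unfolding w_reduction_def
  proof (intro conjI exI)
    show "int_ideal J'" unfolding int_ideal_def using fg_sub[OF fgJ] sJ by blast
    show "J' \<subseteq> I'" by (rule JI)
    show "wop (setmult J' (ipow I' 1)) = wop (ipow I' (Suc 1))"
      using eqm by (simp add: setmult_Rset[OF sI])
  qed
  then have "wop J' = wop I'" using W fgI I0 unfolding w_basic_def by blast
  then have "b * e \<in> wop J'" using sub_wop[OF sI] bI by blast
  then obtain G where G: "fg_ideal G" "vop G = Rset" "\<forall>g\<in>G. b * e * g \<in> J'"
    unfolding wop_iff by blast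
  have "\<forall>g\<in>G. e * g \<in> Rset"
  proof
    fix g assume "g \<in> G"
    then have "b * e * g \<in> {r * b | r. r \<in> Rset}" using G(3) Rspan_single unfolding J'_def by blast
    then obtain r where r: "r \<in> Rset" "b * e * g = r * b" by blast
    then have "e * g = r" using b(2) by (metis mult.assoc mult.commute mult_left_cancel)
    then show "e * g \<in> Rset" using r by simp
  qed
  then have "e \<in> finv G" unfolding finv_def colon_def by blast
  then show ?thesis using GV_finv[OF fg_sub[OF G(1)] G(2)] by simp
qed

definition Gen :: "'a::idom fract set \<Rightarrow> 'a fract set" where
  "Gen F = {u. u \<in> Rset \<and> (\<exists>k\<in>F. \<forall>l\<in>F. u * l / k \<in> Rset)}"

lemma pair_lemma:
  fixes a b :: "'a::idom fract"
  assumes W: "\<forall>I :: 'a fract set. fg_ideal I \<and> I \<noteq> {0} \<longrightarrow> w_basic I"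
    and a: "a \<in> Rset" "a \<noteq> 0" and b: "b \<in> Rset" "b \<noteq> 0"
  shows "\<exists>G. fg_ideal G \<and> vop G = Rset \<and> G \<subseteq> Rspan (Gen {a, b})"
proof -
  define I where "I = Rspan {a * a, a * b, b * b}"
  define J where "J = Rspan {a * a, b * b}"
  have R: "a * a \<in> Rset" "a * b \<in> Rset" "b * b \<in> Rset" using a b Rset_mult by auto
  have fgI: "fg_ideal I" unfolding I_def using R by (intro fg_span) auto
  have fgJ: "fg_ideal J" unfolding J_def using R by (intro fg_span) auto
  have mI: "a * a \<in> I" "a * b \<in> I" "b * b \<in> I" unfolding I_def using Rspan_sup[of "{a * a, a * b, b * b}"] by auto
  have mJ: "a * a \<in> J" "b * b \<in> J" unfolding J_def using Rspan_sup[of "{a * a, b * b}"] by auto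
  have JI: "J \<subseteq> I" unfolding I_def J_def by (rule Rspan_mono) auto
  have I0: "I \<noteq> {0}" using mI a by auto
  have sI: "Rsubmod I" unfolding I_def by (rule Rsubmod_Rspan)
  have sJ: "Rsubmod J" unfolding J_def by (rule Rsubmod_Rspan)
  have eqm: "setmult J I = setmult I I"
  proof (rule antisym)
    show "setmult J I \<subseteq> setmult I I" using JI by (rule setmult_mono) simp
    have g1: "a * a * y \<in> setmult J I" if "y \<in> I" for y using setmult_in mJ that by blast
    have g2: "b * b * y \<in> setmult J I" if "y \<in> I" for y using setmult_in mJ that by blast
    have g3: "a * b * (a * a) \<in> setmult J I"
    proof -
      have "a * b * (a * a) = a * a * (a * b)" by (simp add: ac_simps)
      then show ?thesis using g1[OF mI(2)] by (rule ssubst)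
    qed
    have g4: "a * b * (a * b) \<in> setmult J I"
    proof -
      have "a * b * (a * b) = a * a * (b * b)" by (simp add: ac_simps)
      then show ?thesis using g1[OF mI(3)] by (rule ssubst)
    qed
    have g5: "a * b * (b * b) \<in> setmult J I"
    proof -
      have "a * b * (b * b) = b * b * (a * b)" by (simp add: ac_simps)
      then show ?thesis using g2[OF mI(2)] by (rule ssubst)
    qed
    show "setmult I I \<subseteq> setmult J I" unfolding I_def
    proof (rule setmult_span_le[OF Rsubmod_setmult])
      fix x y assume x: "x \<in> {a * a, a * b, b * b}" and y: "y \<in> {a * a, a * b, b * b}"
      have yI: "y \<in> I" using y mI by blast
      from x show "x * y \<in> setmult J (Rspan {a * a, a * b, b * b})"
        unfolding I_def[symmetric]
      proof (elim insertE)
        assume "x = a * a" then show "x * y \<in> setmult J I" using g1 yI by simp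
      next
        assume "x = b * b" then show "x * y \<in> setmult J I" using g2 yI by simp
      next
        assume "x = a * b" then show "x * y \<in> setmult J I" using y g3 g4 g5 by blast
      next
        assume "x \<in> {}" then show "x * y \<in> setmult J I" by simp
      qed
    qed
  qed
  have "w_reduction J I"
    unfolding w_reduction_def
  proof (intro conjI exI)
    show "int_ideal J" unfolding int_ideal_def using fg_sub[OF fgJ] sJ by blast
    show "J \<subseteq> I" by (rule JI)
    show "wop (setmult J (ipow I 1)) = wop (ipow I (Suc 1))"
      using eqm by (simp add: setmult_Rset[OF sI])
  qed
  then have "wop J = wop I" using W fgI I0 unfolding w_basic_def by blast
  then have "a * b \<in> wop J" using sub_wop[OF sI] mI by blast
  then obtain H where H: "fg_ideal H" "vop H = Rset" "\<forall>h\<in>H. a * b * h \<in> J"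
    unfolding wop_iff by blast
  have "H \<subseteq> Rspan (Gen {a, b})"
  proof
    fix h assume hH: "h \<in> H"
    then have h: "h \<in> Rset" using fg_sub[OF H(1)] by blast
    have "a * b * h \<in> {r * (a * a) + s * (b * b) | r s. r \<in> Rset \<and> s \<in> Rset}"
      using H(3) hH Rspan_pair unfolding J_def by blast
    then obtain r s where rs: "r \<in> Rset" "s \<in> Rset" "a * b * h = r * (a * a) + s * (b * b)" by blast
    define e where "e = r * a / b"
    define f where "f = s * b / a"
    have hef: "h = e + f"
    proof -
      have "a * b * h = a * b * (e + f)"
        unfolding e_def f_def using rs(3) a(2) b(2) by (simp add: field_simps)
      then show ?thesis using a(2) b(2) by simp
    qed
    have ef: "e * f = r * s" unfolding e_def f_def using a(2) b(2) by (simp add: field_simps)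
    have be: "b * e = r * a" unfolding e_def using b(2) by simp
    have eq: "e * e = h * e - r * s" using hef ef by (simp add: algebra_simps)
    have eR: "e \<in> Rset"
      by (rule integral_lemma[OF W b _ h _ eq]) (use be rs a Rset_mult in auto)
    have fR: "f \<in> Rset" using hef h eR Rset_diff by (metis add_diff_cancel_left')
    have eG: "e \<in> Gen {a, b}"
    proof -
      have "e * a / a = e" "e * b / a = r" unfolding e_def using a(2) b(2) by (simp_all add: field_simps)
      then have "\<forall>l\<in>{a, b}. e * l / a \<in> Rset" using eR rs by auto
      then show ?thesis unfolding Gen_def using eR by blast
    qed
    have fG: "f \<in> Gen {a, b}"
    proof -
      have "f * a / b = s" "f * b / b = f" unfolding f_def using a(2) b(2) by (simp_all add: field_simps)
      then have "\<forall>l\<in>{a, b}. f * l / b \<in> Rset" using fR rs by auto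
      then show ?thesis unfolding Gen_def using fR by blast
    qed
    show "h \<in> Rspan (Gen {a, b})"
      unfolding hef using Rsubmod_add[OF Rsubmod_Rspan] eG fG Rspan_sup by blast
  qed
  then show ?thesis using H by blast
qed

lemma Gen_mult:
  fixes u v a k :: "'a::idom fract"
  assumes u: "u \<in> Rset" "k \<in> F" "\<forall>l\<in>F. u * l / k \<in> Rset" and k: "k \<noteq> 0" and a: "a \<noteq> 0"
    and v: "v \<in> Gen {k, a}"
  shows "u * v \<in> Gen (insert a F)"
proof -
  from v have vR: "v \<in> Rset" and vw: "\<exists>m\<in>{k, a}. \<forall>l\<in>{k, a}. v * l / m \<in> Rset"
    unfolding Gen_def by auto
  have uv: "u * v \<in> Rset" using u(1) vR Rset_mult by blast
  from vw show ?thesis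
  proof
    fix m assume m: "m \<in> {k, a}" and vm: "\<forall>l\<in>{k, a}. v * l / m \<in> Rset"
    from m show ?thesis
    proof (elim insertE)
      assume mk: "m = k"
      have "\<forall>l\<in>insert a F. u * v * l / k \<in> Rset"
      proof
        fix l assume "l \<in> insert a F"
        then show "u * v * l / k \<in> Rset"
        proof (elim insertE)
          assume "l = a"
          then have e1: "u * v * l / k = u * (v * a / k)" by simp
          have "v * a / k \<in> Rset" using vm mk by simp
          then show ?thesis unfolding e1 using Rset_mult[OF u(1)] by blast
        next
          assume "l \<in> F"
          then have e1: "u * v * l / k = (u * l / k) * v" by simp
          have "u * l / k \<in> Rset" using u(3) \<open>l \<in> F\<close> by blast
          then show ?thesis unfolding e1 using Rset_mult vR by blast
        qed
      qed
      then show ?thesis unfolding Gen_def using uv u(2) by blast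
    next
      assume ma: "m = a"
      have "\<forall>l\<in>insert a F. u * v * l / a \<in> Rset"
      proof
        fix l assume "l \<in> insert a F"
        then show "u * v * l / a \<in> Rset"
        proof (elim insertE)
          assume "l = a"
          then have "u * v * l / a = u * v" using a by simp
          then show ?thesis using uv by simp
        next
          assume "l \<in> F"
          have e1: "u * v * l / a = (u * l / k) * (v * k / a)" using k by (simp add: field_simps)
          have "u * l / k \<in> Rset" using u(3) \<open>l \<in> F\<close> by blast
          moreover have "v * k / a \<in> Rset" using vm ma by simp
          ultimately show ?thesis unfolding e1 using Rset_mult by blast
        qed
      qed
      then show ?thesis unfolding Gen_def using uv by blast
    next
      assume "m \<in> {}" then show ?thesis by simp
    qed
  qed
qed

lemma Gen_single: "a \<noteq> 0 \<Longrightarrow> Rset \<subseteq> Gen {a}"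
  unfolding Gen_def by auto

lemma lemma_B:
  fixes F :: "'a::idom fract set"
  assumes W: "\<forall>I :: 'a fract set. fg_ideal I \<and> I \<noteq> {0} \<longrightarrow> w_basic I"
  shows "finite F \<Longrightarrow> F \<noteq> {} \<Longrightarrow> F \<subseteq> Rset \<Longrightarrow> 0 \<notin> F \<Longrightarrow>
    \<exists>G. fg_ideal G \<and> vop G = Rset \<and> G \<subseteq> Rspan (Gen F)"
proof (induction F rule: finite_ne_induct)
  case (singleton a)
  then have "Rset \<subseteq> Rspan (Gen {a})" using Gen_single[of a] Rspan_sup[of "Gen {a}"] by auto
  then show ?case using fg_Rset vop_Rset by blast
next
  case (insert a F)
  then obtain G where G: "fg_ideal G" "vop G = Rset" "G \<subseteq> Rspan (Gen F)" by auto
  have "\<forall>k\<in>F. \<exists>Gk. fg_ideal Gk \<and> vop Gk = Rset \<and> Gk \<subseteq> Rspan (Gen {k, a})"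
  proof
    fix k assume "k \<in> F"
    then show "\<exists>Gk. fg_ideal Gk \<and> vop Gk = Rset \<and> Gk \<subseteq> Rspan (Gen {k, a})"
      using pair_lemma[OF W, of k a] insert.prems by blast
  qed
  then obtain Gk where Gk: "\<forall>k\<in>F. fg_ideal (Gk k) \<and> vop (Gk k) = Rset \<and> Gk k \<subseteq> Rspan (Gen {k, a})"
    by metis
  obtain Q where Q: "fg_ideal Q" "vop Q = Rset" "\<forall>k\<in>F. Q \<subseteq> Gk k"
    using GV_family[OF insert.hyps(1), of Gk] Gk by blast
  have P: "fg_ideal (setmult G Q) \<and> vop (setmult G Q) = Rset \<and> setmult G Q \<subseteq> G \<and> setmult G Q \<subseteq> Q"
    by (rule GV_prod[OF G(1,2) Q(1,2)])
  have a0: "a \<noteq> 0" using insert.prems by auto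
  have "setmult G Q \<subseteq> Rspan (Gen (insert a F))"
  proof (rule setmult_le[OF Rsubmod_Rspan])
    fix g q assume g: "g \<in> G" and q: "q \<in> Q"
    have "\<forall>u\<in>Gen F. q * u \<in> Rspan (Gen (insert a F))"
    proof
      fix u assume "u \<in> Gen F"
      then obtain k where k: "u \<in> Rset" "k \<in> F" "\<forall>l\<in>F. u * l / k \<in> Rset" unfolding Gen_def by blast
      have k0: "k \<noteq> 0" using k(2) insert.prems by auto
      have "\<forall>v\<in>Gen {k, a}. u * v \<in> Rspan (Gen (insert a F))"
        using Gen_mult[OF k k0 a0] Rspan_sup by blast
      moreover have "q \<in> Rspan (Gen {k, a})" using Q(3) Gk k(2) q by blast
      ultimately have "u * q \<in> Rspan (Gen (insert a F))" using span_ext[OF Rsubmod_Rspan] by blast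
      then show "q * u \<in> Rspan (Gen (insert a F))" by (simp add: mult.commute)
    qed
    then have "q * g \<in> Rspan (Gen (insert a F))" using span_ext[OF Rsubmod_Rspan] G(3) g by blast
    then show "g * q \<in> Rspan (Gen (insert a F))" by (simp add: mult.commute)
  qed
  then show ?case using P by blast
qed

lemma lemma_C:
  fixes F :: "'a::idom fract set"
  assumes "0 \<notin> F"
  shows "Rspan (Gen F) \<subseteq> setmult (Rspan F) (finv (Rspan F))"
proof (rule Rspan_least[OF Rsubmod_setmult])
  show "Gen F \<subseteq> setmult (Rspan F) (finv (Rspan F))"
  proof
    fix u assume "u \<in> Gen F"
    then obtain k where k: "u \<in> Rset" "k \<in> F" "\<forall>l\<in>F. u * l / k \<in> Rset" unfolding Gen_def by blast
    have k0: "k \<noteq> 0" using k(2) assms by auto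
    have "\<forall>l\<in>F. (u / k) * l \<in> Rset" using k(3) by simp
    then have "\<forall>b\<in>Rspan F. (u / k) * b \<in> Rset" using span_ext[OF Rsubmod_Rset] by blast
    then have "u / k \<in> finv (Rspan F)" unfolding finv_def colon_def by blast
    moreover have "k \<in> Rspan F" using k(2) Rspan_sup by blast
    ultimately have "k * (u / k) \<in> setmult (Rspan F) (finv (Rspan F))" using setmult_in by blast
    then show "u \<in> setmult (Rspan F) (finv (Rspan F))" using k0 by simp
  qed
qed

lemma tclos_sub: "tclos X \<subseteq> Rset"
  unfolding tclos_def using vop_sub fg_sub by blast

lemma Rsubmod_zero: "Rsubmod {0}"
  unfolding Rsubmod_def by simp

lemma fg_ipow: "fg_ideal I \<Longrightarrow> fg_ideal (ipow I n)"
  by (induction n) (simp_all add: fg_Rset fg_mult)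

lemma pow_ipow: "a \<in> I \<Longrightarrow> a ^ n \<in> ipow I n"
  by (induction n) (simp_all add: Rset_1 setmult_in)

theorem theorem2p1:
  "PvMD TYPE('a::idom) \<longleftrightarrow>
     (\<forall>I :: 'a fract set. fg_ideal I \<and> I \<noteq> {0} \<longrightarrow> w_basic I)"
proof
  assume W: "\<forall>I :: 'a fract set. fg_ideal I \<and> I \<noteq> {0} \<longrightarrow> w_basic I"
  show "PvMD TYPE('a)"
    unfolding PvMD_def
  proof (intro allI impI)
    fix I :: "'a fract set" assume I: "fg_ideal I \<and> I \<noteq> {0}"
    then obtain F where F: "finite F" "F \<subseteq> Rset" "I = Rspan F" unfolding fg_ideal_def by blast
    define F' where "F' = F - {0}"
    have "Rspan F' \<subseteq> Rspan F" unfolding F'_def by (rule Rspan_mono) auto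
    moreover have "Rspan F \<subseteq> Rspan F'"
    proof (rule Rspan_least[OF Rsubmod_Rspan])
      show "F \<subseteq> Rspan F'"
        using Rspan_sup[of F'] Rsubmod_0[OF Rsubmod_Rspan, of F'] unfolding F'_def by blast
    qed
    ultimately have IF': "I = Rspan F'" using F(3) by blast
    have "F' \<noteq> {}"
    proof
      assume "F' = {}"
      then have "F \<subseteq> {0}" unfolding F'_def by blast
      then have "I \<subseteq> {0}" using F(3) Rspan_least[OF Rsubmod_zero] by blast
      then show False using I Rsubmod_0[OF fg_submod] by blast
    qed
    then obtain G where G: "fg_ideal G" "vop G = Rset" "G \<subseteq> Rspan (Gen F')"
      using lemma_B[OF W, of F'] F unfolding F'_def by auto
    have "G \<subseteq> setmult I (finv I)" using G(3) lemma_C[of F'] IF' unfolding F'_def by blast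
    then have "Rset \<subseteq> tclos (setmult I (finv I))" unfolding tclos_def using G by blast
    then show "tclos (setmult I (finv I)) = Rset" using tclos_sub by blast
  qed
next
  assume P: "PvMD TYPE('a)"
  show "\<forall>I :: 'a fract set. fg_ideal I \<and> I \<noteq> {0} \<longrightarrow> w_basic I"
  proof (intro allI impI)
    fix I :: "'a fract set" assume I: "fg_ideal I \<and> I \<noteq> {0}"
    have sI: "Rsubmod I" using I fg_submod by blast
    obtain a where a: "a \<in> I" "a \<noteq> 0" using I Rsubmod_0[OF sI] by blast
    show "w_basic I"
      unfolding w_basic_def
    proof (intro allI impI)
      fix J assume "w_reduction J I"
      then obtain n where J: "int_ideal J" "J \<subseteq> I" and
        eqn: "wop (setmult J (ipow I n)) = wop (setmult I (ipow I n))"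
        unfolding w_reduction_def by auto
      define A where "A = ipow I n"
      have sJ: "Rsubmod J" using J(1) unfolding int_ideal_def by blast
      have sWJ: "Rsubmod (wop J)" by (rule Rsubmod_wop[OF sJ])
      have fgA: "fg_ideal A" unfolding A_def using I fg_ipow by blast
      have an: "a ^ n \<in> A" unfolding A_def by (rule pow_ipow[OF a(1)])
      have "a ^ n \<noteq> 0" using a(2) by simp
      then have A0: "A \<noteq> {0}" using an by blast
      have "tclos (setmult A (finv A)) = Rset" using P fgA A0 unfolding PvMD_def by simp
      then have "1 \<in> tclos (setmult A (finv A))" using Rset_1 by simp
      then obtain H where H: "fg_ideal H" "H \<subseteq> setmult A (finv A)" "1 \<in> vop H"
        unfolding tclos_def by blast
      have vH: "vop H = Rset" using one_vop[OF fg_sub[OF H(1)] H(3)] .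
      have key: "\<forall>z\<in>setmult A (finv A). y * z \<in> wop J" if y: "y \<in> I" for y
      proof -
        have "setmult A (finv A) \<subseteq> {z. y * z \<in> wop J}"
        proof (rule setmult_le[OF Rsubmod_premult[OF sWJ]])
          fix \<alpha> \<beta> assume al: "\<alpha> \<in> A" and be: "\<beta> \<in> finv A"
          have "y * \<alpha> \<in> setmult I A" using setmult_in y al by blast
          then have "y * \<alpha> \<in> wop (setmult J A)" using sub_wop[OF Rsubmod_setmult] eqn
            unfolding A_def by blast
          then obtain G' where G': "fg_ideal G'" "vop G' = Rset" "\<forall>g\<in>G'. y * \<alpha> * g \<in> setmult J A"
            unfolding wop_iff by blast
          have mJA: "setmult J A \<subseteq> {z. \<beta> * z \<in> J}"
          proof (rule setmult_le[OF Rsubmod_premult[OF sJ]])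
            fix j a' assume j: "j \<in> J" and a': "a' \<in> A"
            have "\<beta> * a' \<in> Rset" using be a' unfolding finv_def colon_def by blast
            then have "a' * \<beta> \<in> Rset" by (simp add: mult.commute)
            then have "(a' * \<beta>) * j \<in> J" using Rsubmod_smult[OF sJ] j by blast
            then show "j * a' \<in> {z. \<beta> * z \<in> J}" by (simp add: ac_simps)
          qed
          have "\<forall>g\<in>G'. y * (\<alpha> * \<beta>) * g \<in> J"
          proof
            fix g assume "g \<in> G'"
            then have "\<beta> * (y * \<alpha> * g) \<in> J" using G'(3) mJA by blast
            then show "y * (\<alpha> * \<beta>) * g \<in> J" by (simp add: ac_simps)
          qed
          then show "\<alpha> * \<beta> \<in> {z. y * z \<in> wop J}" unfolding wop_iff using G' by blast
        qed
        then show ?thesis by blast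
      qed
      have "wop I \<subseteq> wop J"
      proof
        fix x assume "x \<in> wop I"
        then obtain G where G: "fg_ideal G" "vop G = Rset" "\<forall>g\<in>G. x * g \<in> I"
          unfolding wop_iff by blast
        have PG: "fg_ideal (setmult G H) \<and> vop (setmult G H) = Rset \<and> setmult G H \<subseteq> G \<and> setmult G H \<subseteq> H"
          by (rule GV_prod[OF G(1,2) H(1) vH])
        have "setmult G H \<subseteq> {z. x * z \<in> wop J}"
        proof (rule setmult_le[OF Rsubmod_premult[OF sWJ]])
          fix g h assume g: "g \<in> G" and h: "h \<in> H"
          have "(x * g) * h \<in> wop J" using key[of "x * g"] G(3) g H(2) h by blast
          then show "g * h \<in> {z. x * z \<in> wop J}" by (simp add: ac_simps)
        qed
        then show "x \<in> wop J" using wop_idem[OF sJ] PG by blast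
      qed
      moreover have "wop J \<subseteq> wop I" using wop_mono J(2) by blast
      ultimately show "wop J = wop I" by blast
    qed
  qed
qed

end
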